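(* Let $\mathcal{H}$ be a separable complex Hilbert space. If $N \in B(\mathcal{H})$ is a normal operator, $P \in B(\mathcal{H})$ is a rank-one orthogonal projection, and $a \in \mathbb{C}$, then $T = N + aP$ is a complex symmetric operator.
   Context: A conjugation on $\mathcal{H}$ is a conjugate-linear map $C:\mathcal{H}\to\mathcal{H}$ that is isometric and involutive ($C^2=I$). An operator $T$ is complex symmetric if $T = CT^*C$ for some conjugation $C$. *)

theory Defs
  imports "HOL-Analysis.Analysis"
begin

text \<open>The HOL distribution has no complex inner product spaces, so we introduce
  the class of complex Hilbert spaces: a real Banach space carrying a compatible
  complex scalar multiplication and a complex inner product (linear in the second
  argument, conjugate-linear in the first) inducing its norm.\<close>

class chilbert_space = real_normed_vector + complete_space +
  fixes scaleC :: "complex \<Rightarrow> 'a \<Rightarrow> 'a"  (infixr "*\<^sub>C" 75)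
    and cinner :: "'a \<Rightarrow> 'a \<Rightarrow> complex"
  assumes scaleC_add_right: "a *\<^sub>C (x + y) = a *\<^sub>C x + a *\<^sub>C y"
    and scaleC_add_left: "(a + b) *\<^sub>C x = a *\<^sub>C x + b *\<^sub>C x"
    and scaleC_scaleC: "a *\<^sub>C (b *\<^sub>C x) = (a * b) *\<^sub>C x"
    and scaleC_one: "1 *\<^sub>C x = x"
    and scaleR_scaleC: "r *\<^sub>R x = complex_of_real r *\<^sub>C x"
    and cinner_commute: "cinner x y = cnj (cinner y x)"
    and cinner_add_right: "cinner x (y + z) = cinner x y + cinner x z"
    and cinner_scaleC_right: "cinner x (a *\<^sub>C y) = a * cinner x y"
    and cinner_self_norm: "cinner x x = complex_of_real ((norm x)\<^sup>2)"

definition separable_type :: "'a::topological_space itself \<Rightarrow> bool" where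
  "separable_type _ \<longleftrightarrow> (\<exists>D::'a set. countable D \<and> closure D = UNIV)"

definition bounded_op :: "('a::chilbert_space \<Rightarrow> 'a) \<Rightarrow> bool" where
  "bounded_op T \<longleftrightarrow> bounded_linear T \<and> (\<forall>c x. T (c *\<^sub>C x) = c *\<^sub>C T x)"

definition adjoint :: "('a::chilbert_space \<Rightarrow> 'a) \<Rightarrow> ('a \<Rightarrow> 'a)" where
  "adjoint T = (THE S. \<forall>x y. cinner (T x) y = cinner x (S y))"

definition normal_op :: "('a::chilbert_space \<Rightarrow> 'a) \<Rightarrow> bool" where
  "normal_op N \<longleftrightarrow> bounded_op N \<and> N \<circ> adjoint N = adjoint N \<circ> N"

definition orth_projection :: "('a::chilbert_space \<Rightarrow> 'a) \<Rightarrow> bool" where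
  "orth_projection P \<longleftrightarrow> bounded_op P \<and> P \<circ> P = P \<and> adjoint P = P"

definition rank_one :: "('a::chilbert_space \<Rightarrow> 'a) \<Rightarrow> bool" where
  "rank_one T \<longleftrightarrow> (\<exists>v. v \<noteq> 0 \<and> range T = {c *\<^sub>C v | c. True})"

definition conjugation :: "('a::chilbert_space \<Rightarrow> 'a) \<Rightarrow> bool" where
  "conjugation C \<longleftrightarrow>
     (\<forall>x y. C (x + y) = C x + C y) \<and> (\<forall>c x. C (c *\<^sub>C x) = cnj c *\<^sub>C C x) \<and>
     (\<forall>x. norm (C x) = norm x) \<and> C \<circ> C = id"

definition complex_symmetric :: "('a::chilbert_space \<Rightarrow> 'a) \<Rightarrow> bool" where
  "complex_symmetric T \<longleftrightarrow> (\<exists>C. conjugation C \<and> T = C \<circ> adjoint T \<circ> C)"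

end

theory Submission
  imports Defs
begin


lemma scaleC_zero_left[simp]: "0 *\<^sub>C (x::'a::chilbert_space) = 0"
  using scaleR_scaleC[of 0 x] by simp

lemma scaleC_zero_right[simp]: "c *\<^sub>C 0 = 0"
proof -
  have "c *\<^sub>C 0 = c *\<^sub>C (0 + 0)" by simp
  also have "\<dots> = c *\<^sub>C 0 + c *\<^sub>C 0" by (rule scaleC_add_right)
  finally show ?thesis by simp
qed

lemma scaleC_minus_left: "(- c) *\<^sub>C x = - (c *\<^sub>C x)"
proof -
  have "(- c) *\<^sub>C x + c *\<^sub>C x = (- c + c) *\<^sub>C x" by (rule scaleC_add_left[symmetric])
  also have "\<dots> = 0" by simp
  finally show ?thesis by (rule iffD2[OF eq_neg_iff_add_eq_0])
qed

lemma scaleC_minus_right: "c *\<^sub>C (- x) = - (c *\<^sub>C x)"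
proof -
  have "c *\<^sub>C (- x) + c *\<^sub>C x = c *\<^sub>C (- x + x)" by (rule scaleC_add_right[symmetric])
  also have "\<dots> = 0" by simp
  finally show ?thesis by (rule iffD2[OF eq_neg_iff_add_eq_0])
qed

lemma scaleC_diff_right: "c *\<^sub>C (x - y) = c *\<^sub>C x - c *\<^sub>C y"
  by (simp only: diff_conv_add_uminus scaleC_add_right scaleC_minus_right)

lemma scaleC_diff_left: "(a - b) *\<^sub>C x = a *\<^sub>C x - b *\<^sub>C x"
  by (simp only: diff_conv_add_uminus scaleC_add_left scaleC_minus_left)

lemma scaleC_minus1: "(-1) *\<^sub>C x = - x"
  by (simp add: scaleC_minus_left scaleC_one)

lemma cinner_add_left: "cinner (x + y) z = cinner x z + cinner y z"
  by (subst (1 2 3) cinner_commute) (simp add: cinner_add_right)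

lemma cinner_scaleC_left: "cinner (a *\<^sub>C x) y = cnj a * cinner x y"
  by (subst (1 2) cinner_commute) (simp add: cinner_scaleC_right)

lemma cinner_zero_right[simp]: "cinner x 0 = 0"
  using cinner_scaleC_right[of x 0 0] by simp

lemma cinner_zero_left[simp]: "cinner 0 x = 0"
  using cinner_scaleC_left[of 0 0 x] by simp

lemma cinner_minus_right: "cinner x (- y) = - cinner x y"
  using cinner_scaleC_right[of x "-1" y] by (simp add: scaleC_minus1)

lemma cinner_minus_left: "cinner (- x) y = - cinner x y"
  using cinner_scaleC_left[of "-1" x y] by (simp add: scaleC_minus1)

lemma cinner_diff_right: "cinner x (y - z) = cinner x y - cinner x z"
  by (simp only: diff_conv_add_uminus cinner_add_right cinner_minus_right)

lemma cinner_diff_left: "cinner (x - y) z = cinner x z - cinner y z"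
  by (simp only: diff_conv_add_uminus cinner_add_left cinner_minus_left)

lemma cinner_self_zero[simp]: "cinner x x = 0 \<longleftrightarrow> x = 0"
  by (simp add: cinner_self_norm)

lemma cinner_sum_right: "cinner x (sum_list (map f xs)) = sum_list (map (\<lambda>a. cinner x (f a)) xs)"
  by (induction xs) (auto simp: cinner_add_right)

lemma cinner_sum_left: "cinner (sum_list (map f xs)) y = sum_list (map (\<lambda>a. cinner (f a) y) xs)"
  by (induction xs) (auto simp: cinner_add_left)

lemma norm_sq_cinner: "complex_of_real ((norm x)\<^sup>2) = cinner x x"
  by (simp add: cinner_self_norm)

lemma cinner_real_self: "Im (cinner x x) = 0" "Re (cinner x x) = (norm x)\<^sup>2"
  by (simp_all add: cinner_self_norm)

lemma norm_scaleC: "norm (c *\<^sub>C x) = cmod c * norm x"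
proof -
  have "(norm (c *\<^sub>C x))\<^sup>2 = Re (cinner (c *\<^sub>C x) (c *\<^sub>C x))"
    by (simp add: cinner_real_self)
  also have "\<dots> = Re ((c * cnj c) * cinner x x)"
    by (simp add: cinner_scaleC_left cinner_scaleC_right mult_ac)
  also have "c * cnj c = complex_of_real ((cmod c)\<^sup>2)"
    by (rule complex_norm_square[symmetric])
  also have "Re (complex_of_real ((cmod c)\<^sup>2) * cinner x x) = (cmod c)\<^sup>2 * (norm x)\<^sup>2"
    by (simp add: cinner_real_self)
  finally have "(norm (c *\<^sub>C x))\<^sup>2 = (cmod c * norm x)\<^sup>2" by (simp add: power_mult_distrib)
  then show ?thesis by (simp add: power2_eq_iff_nonneg)
qed

lemma norm_add_sq: "(norm (x + y))\<^sup>2 = (norm x)\<^sup>2 + (norm y)\<^sup>2 + 2 * Re (cinner x y)"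
proof -
  have "(norm (x+y))\<^sup>2 = Re (cinner (x+y) (x+y))"
    by (simp add: cinner_real_self)
  also have "\<dots> = Re (cinner x x) + Re (cinner y y) + (Re (cinner x y) + Re (cinner y x))"
    by (simp add: cinner_add_left cinner_add_right)
  also have "Re (cinner y x) = Re (cinner x y)"
    by (subst cinner_commute) simp
  finally show ?thesis by (simp add: cinner_real_self)
qed

lemma norm_diff_sq: "(norm (x - y))\<^sup>2 = (norm x)\<^sup>2 + (norm y)\<^sup>2 - 2 * Re (cinner x y)"
  using norm_add_sq[of x "-y"] by (simp add: cinner_minus_right)

lemma pythagoras: "cinner x y = 0 \<Longrightarrow> (norm (x + y))\<^sup>2 = (norm x)\<^sup>2 + (norm y)\<^sup>2"
  by (simp add: norm_add_sq)


lemma Re_cinner_le: "Re (cinner x y) \<le> norm x * norm y"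
proof -
  define a where "a = norm y"
  define b where "b = norm x"
  have "0 \<le> (norm (complex_of_real a *\<^sub>C x - complex_of_real b *\<^sub>C y))\<^sup>2" by simp
  also have "\<dots> = (a * b)\<^sup>2 + (b * a)\<^sup>2 - 2 * (a * b * Re (cinner x y))"
    unfolding norm_diff_sq norm_scaleC
    by (simp add: cinner_scaleC_left cinner_scaleC_right a_def b_def abs_of_nonneg)
  finally have h: "a * b * Re (cinner x y) \<le> (a * b) * (a * b)"
    by (simp add: power2_eq_square mult_ac)
  show ?thesis
  proof (cases "a * b = 0")
    case True
    then have "x = 0 \<or> y = 0" by (auto simp: a_def b_def)
    then show ?thesis by auto
  next
    case False
    then have "a * b > 0" using a_def b_def by (simp add: less_le)
    with h show ?thesis by (metis mult_right_le_imp_le mult.commute a_def b_def)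
  qed
qed

lemma cinner_cauchy_schwarz: "cmod (cinner x y) \<le> norm x * norm y"
proof (cases "cinner x y = 0")
  case True then show ?thesis by simp
next
  case False
  define c where "c = cinner x y"
  define w where "w = cnj c / complex_of_real (cmod c)"
  have cw: "cmod w = 1" using False by (simp add: w_def c_def norm_divide)
  have cc: "cnj c * c = complex_of_real ((cmod c)\<^sup>2)"
    by (metis complex_norm_square mult.commute)
  have cn: "cmod c \<noteq> 0" using False by (simp add: c_def)
  have "w * c = complex_of_real ((cmod c)\<^sup>2) / complex_of_real (cmod c)"
    unfolding w_def by (simp only: times_divide_eq_left cc)
  also have "\<dots> = complex_of_real (cmod c)"
    using cn by (simp add: power2_eq_square)
  finally have "w * c = complex_of_real (cmod c)" .
  then have "cmod c = Re (cinner x (w *\<^sub>C y))"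
    by (simp add: cinner_scaleC_right c_def)
  also have "\<dots> \<le> norm x * norm (w *\<^sub>C y)" by (rule Re_cinner_le)
  also have "\<dots> = norm x * norm y" by (simp add: norm_scaleC cw)
  finally show ?thesis by (simp add: c_def)
qed


definition csubspace :: "'a::chilbert_space set \<Rightarrow> bool" where
  "csubspace V \<longleftrightarrow> 0 \<in> V \<and> (\<forall>x\<in>V. \<forall>y\<in>V. x + y \<in> V) \<and> (\<forall>c. \<forall>x\<in>V. c *\<^sub>C x \<in> V)"

lemma csubspace_diff: "csubspace V \<Longrightarrow> x \<in> V \<Longrightarrow> y \<in> V \<Longrightarrow> x - y \<in> V"
  unfolding csubspace_def by (metis diff_conv_add_uminus scaleC_minus1)

lemma mult_cnj_sq: "c * cnj c = (complex_of_real (cmod c))\<^sup>2"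
  by (metis complex_norm_square of_real_power)

lemma infdist_approx:
  assumes "A \<noteq> {}" "e > 0"
  shows "\<exists>a\<in>A. dist x a < infdist x A + e"
proof (rule ccontr)
  assume "\<not> ?thesis"
  then have "\<forall>a\<in>A. infdist x A + e \<le> dist x a" by (auto simp: not_less)
  then have "infdist x A + e \<le> infdist x A"
    unfolding infdist_notempty[OF assms(1)] using assms(1) by (intro cINF_greatest) auto
  with assms(2) show False by simp
qed

lemma parallelogram:
  "(norm (a + b))\<^sup>2 + (norm (a - b))\<^sup>2 = 2 * (norm a)\<^sup>2 + 2 * (norm (b::'a::chilbert_space))\<^sup>2"
  by (simp add: norm_add_sq norm_diff_sq)

lemma orth_exists:
  fixes V :: "'a::chilbert_space set"
  assumes V: "csubspace V" and x: "x \<notin> closure V"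
  shows "\<exists>z. z \<noteq> 0 \<and> (\<forall>y\<in>V. cinner y z = 0)"
proof -
  have Vne: "V \<noteq> {}" using V by (auto simp: csubspace_def)
  define d where "d = infdist x V"
  have dpos: "d > 0"
    using x Vne in_closure_iff_infdist_zero[of V x] infdist_nonneg[of x V] by (simp add: d_def)
  have dle: "d \<le> dist x q" if "q \<in> closure V" for q
  proof -
    obtain r where r: "\<And>n. r n \<in> V" "r \<longlonglongrightarrow> q" using \<open>q \<in> closure V\<close> unfolding closure_sequential by blast
    have "(\<lambda>n. dist x (r n)) \<longlonglongrightarrow> dist x q" by (intro tendsto_dist tendsto_const r)
    moreover have "\<forall>n. d \<le> dist x (r n)" using r(1) infdist_le by (auto simp: d_def)
    ultimately show ?thesis by (intro LIMSEQ_le) auto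
  qed
  define e where "e = (\<lambda>n::nat. 1 / (real n + 1))"
  have epos: "e n > 0" for n by (simp add: e_def)
  have ele1: "e n \<le> 1" for n by (simp add: e_def)
  have "\<forall>n. \<exists>y\<in>V. dist x y < d + e n" using infdist_approx[OF Vne epos] by (simp add: d_def)
  then obtain s where s: "\<And>n. s n \<in> V" "\<And>n. dist x (s n) < d + e n" by metis
  define K where "K = 4 * d + 4"
  have bound: "(norm (s n - s m))\<^sup>2 \<le> K * (e n + e m)" for n m
  proof -
    define mid where "mid = (1/2::complex) *\<^sub>C (s n + s m)"
    have midV: "mid \<in> V" using V s(1) by (auto simp: csubspace_def mid_def)
    have "d \<le> dist x mid" using midV closure_subset dle by blast
    then have dmid: "d \<le> norm (x - mid)" by (simp add: dist_norm)
    have eq1: "(x - s m) + (x - s n) = 2 *\<^sub>C (x - mid)"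
    proof -
      have "2 *\<^sub>C (x - mid) = 2 *\<^sub>C x - (2 * (1/2)) *\<^sub>C (s n + s m)"
        by (simp add: mid_def scaleC_diff_right scaleC_scaleC)
      also have "\<dots> = (x - s m) + (x - s n)"
        using scaleR_scaleC[of 2 x] by (simp add: scaleC_one algebra_simps scaleR_2)
      finally show ?thesis by simp
    qed
    have eq2: "(x - s m) - (x - s n) = s n - s m" by simp
    have p: "(norm (s n - s m))\<^sup>2 = 2 * (norm (x - s m))\<^sup>2 + 2 * (norm (x - s n))\<^sup>2 - 4 * (norm (x - mid))\<^sup>2"
      using parallelogram[of "x - s m" "x - s n"] unfolding eq1 eq2 norm_scaleC
      by (simp add: power_mult_distrib)
    have a: "norm (x - s m) \<le> d + e m" "norm (x - s n) \<le> d + e n"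
      using s(2) by (auto simp: dist_norm less_imp_le)
    have a2: "(norm (x - s m))\<^sup>2 \<le> (d + e m)\<^sup>2" "(norm (x - s n))\<^sup>2 \<le> (d + e n)\<^sup>2"
      using a by (auto intro!: power_mono)
    have b2: "d\<^sup>2 \<le> (norm (x - mid))\<^sup>2" using dmid dpos by (auto intro!: power_mono)
    have "(norm (s n - s m))\<^sup>2 \<le> 2 * (d + e m)\<^sup>2 + 2 * (d + e n)\<^sup>2 - 4 * d\<^sup>2"
      using p a2 b2 by linarith
    also have "\<dots> = 4 * d * (e m + e n) + 2 * (e m)\<^sup>2 + 2 * (e n)\<^sup>2"
      by (simp add: power2_eq_square algebra_simps)
    also have "\<dots> \<le> K * (e n + e m)"
    proof -
      have sq: "(e k)\<^sup>2 \<le> e k" for k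
      proof -
        have "e k * e k \<le> e k * 1" by (rule mult_left_mono[OF ele1]) (simp add: less_imp_le epos)
        then show ?thesis by (simp add: power2_eq_square)
      qed
      have "(e m)\<^sup>2 \<le> e m" "(e n)\<^sup>2 \<le> e n" by (rule sq)+
      then show ?thesis using epos[of m] epos[of n] dpos unfolding K_def by (simp add: algebra_simps)
    qed
    finally show ?thesis .
  qed
  have "Cauchy s"
  proof (rule metric_CauchyI)
    fix eps :: real assume "eps > 0"
    then have "eps\<^sup>2 > 0" by simp
    obtain N :: nat where N: "2 * K / eps\<^sup>2 < real N + 1"
      using reals_Archimedean2[of "2 * K / eps\<^sup>2"] by (metis add.commute add_strict_increasing zero_less_one order_less_imp_le) 
    show "\<exists>M. \<forall>m\<ge>M. \<forall>n\<ge>M. dist (s m) (s n) < eps"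
    proof (intro exI allI impI)
      fix m n assume mn: "N \<le> m" "N \<le> n"
      have em: "e m \<le> 1 / (real N + 1)" "e n \<le> 1 / (real N + 1)"
        using mn by (auto simp: e_def intro!: divide_left_mono)
      have Kpos: "K > 0" using dpos by (simp add: K_def)
      have "e m + e n \<le> 1 / (real N + 1) + 1 / (real N + 1)" using em by linarith
      also have "\<dots> = 2 / (real N + 1)" by (simp add: add_divide_distrib[symmetric])
      finally have emn: "e m + e n \<le> 2 / (real N + 1)" .
      have "(dist (s m) (s n))\<^sup>2 \<le> K * (e m + e n)"
        using bound[of m n] by (simp add: dist_norm add.commute)
      also have "\<dots> \<le> K * (2 / (real N + 1))" using emn Kpos by (intro mult_left_mono) auto
      also have "\<dots> < eps\<^sup>2"
      proof -
        have h0: "2 * K < (real N + 1) * eps\<^sup>2"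
          using N \<open>eps\<^sup>2 > 0\<close> by (simp add: pos_divide_less_eq)
        then have h: "2 * K < eps\<^sup>2 * (real N + 1)" by (simp only: mult.commute)
        have "K * (2 / (real N + 1)) = (2 * K) / (real N + 1)" by simp
        also have "\<dots> < eps\<^sup>2" using h by (simp add: pos_divide_less_eq)
        finally show ?thesis .
      qed
      finally have "(dist (s m) (s n))\<^sup>2 < eps\<^sup>2" .
      then show "dist (s m) (s n) < eps"
        by (rule power2_less_imp_less[OF _ less_imp_le[OF \<open>eps > 0\<close>]])
    qed
  qed
  then obtain m where m: "s \<longlonglongrightarrow> m" unfolding Cauchy_convergent_iff convergent_def by blast
  have mcl: "m \<in> closure V" unfolding closure_sequential using s(1) m by blast
  have "(\<lambda>n. dist x (s n)) \<longlonglongrightarrow> dist x m" by (intro tendsto_dist tendsto_const m)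
  moreover have "\<forall>n. dist x (s n) \<le> d + e n" using s(2) by (auto intro: less_imp_le)
  moreover have "(\<lambda>n. d + e n) \<longlonglongrightarrow> d"
  proof -
    have "(\<lambda>n. e n) \<longlonglongrightarrow> 0"
      unfolding e_def using LIMSEQ_inverse_real_of_nat by (simp add: inverse_eq_divide add.commute)
    then show ?thesis using tendsto_add[OF tendsto_const[of d]] by fastforce
  qed
  ultimately have "dist x m \<le> d" by (intro LIMSEQ_le) auto
  with dle[OF mcl] have dm: "dist x m = d" by simp
  define z where "z = x - m"
  have znorm: "norm z = d" using dm by (simp add: z_def dist_norm)
  have zmin: "norm z \<le> norm (z - t *\<^sub>C y)" if "y \<in> V" for t y
  proof -
    have "(\<lambda>n. dist x (s n + t *\<^sub>C y)) \<longlonglongrightarrow> dist x (m + t *\<^sub>C y)" by (intro tendsto_dist tendsto_add tendsto_const m)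
    moreover have "\<forall>n. d \<le> dist x (s n + t *\<^sub>C y)"
    proof
      fix n
      have "s n + t *\<^sub>C y \<in> V" using V s(1) that unfolding csubspace_def by blast
      then show "d \<le> dist x (s n + t *\<^sub>C y)" using dle closure_subset by blast
    qed
    ultimately have "d \<le> dist x (m + t *\<^sub>C y)" by (intro LIMSEQ_le) auto
    moreover have "z - t *\<^sub>C y = x - (m + t *\<^sub>C y)" by (simp add: z_def)
    ultimately show ?thesis using znorm by (simp only: dist_norm)
  qed
  show ?thesis
  proof (intro exI conjI ballI)
    show "z \<noteq> 0" using znorm dpos by auto
  next
    fix y assume y: "y \<in> V"
    show "cinner y z = 0"
    proof (cases "y = 0")
      case True then show ?thesis by simp
    next
      case False
      define c where "c = cinner y z"
      define n where "n = (norm y)\<^sup>2"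
      have npos: "n > 0" using False by (simp add: n_def)
      define t where "t = c / complex_of_real n"
      have "(norm (z - t *\<^sub>C y))\<^sup>2 = (norm z)\<^sup>2 + (cmod t * norm y)\<^sup>2 - 2 * Re (cinner z (t *\<^sub>C y))"
        by (simp add: norm_diff_sq norm_scaleC)
      also have "Re (cinner z (t *\<^sub>C y)) = (cmod c)\<^sup>2 / n"
      proof -
        have "cinner z (t *\<^sub>C y) = t * cnj c"
          by (simp add: cinner_scaleC_right c_def cinner_commute[of z y])
        also have "\<dots> = complex_of_real ((cmod c)\<^sup>2 / n)"
          by (simp add: t_def mult_cnj_sq)
        finally show ?thesis by simp
      qed
      also have "(cmod t * norm y)\<^sup>2 = (cmod c)\<^sup>2 / n"
      proof -
        have ct: "cmod t = cmod c / n" using npos by (simp add: t_def norm_divide)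
        show ?thesis
          unfolding ct power_mult_distrib power_divide n_def[symmetric] using npos by (simp add: power2_eq_square)
      qed
      finally have "(norm (z - t *\<^sub>C y))\<^sup>2 = (norm z)\<^sup>2 - (cmod c)\<^sup>2 / n" by simp
      moreover have "(norm z)\<^sup>2 \<le> (norm (z - t *\<^sub>C y))\<^sup>2"
        using zmin[OF y, of t] by (simp add: power_mono)
      ultimately have "(cmod c)\<^sup>2 / n \<le> 0" by simp
      then have "(cmod c)\<^sup>2 \<le> 0" using npos by (simp add: divide_le_0_iff)
      then show ?thesis by (simp add: c_def)
    qed
  qed
qed


lemma cinner_ext: "(\<And>x. cinner x a = cinner x b) \<Longrightarrow> a = b"
proof -
  assume h: "\<And>x. cinner x a = cinner x b"
  have "cinner (a - b) (a - b) = 0" using h[of "a - b"] by (simp add: cinner_diff_right)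
  then show "a = b" by simp
qed

lemma bl_add: "bounded_linear f \<Longrightarrow> f (x + y) = f x + f y"
  by (simp add: bounded_linear.linear linear_add)
lemma bl_diff: "bounded_linear f \<Longrightarrow> f (x - y) = f x - f y"
  by (simp add: bounded_linear.linear linear_diff)
lemma bl_zero: "bounded_linear f \<Longrightarrow> f 0 = 0"
  by (simp add: bounded_linear.linear linear_0)

lemma riesz:
  fixes f :: "'a::chilbert_space \<Rightarrow> complex"
  assumes f: "bounded_linear f" and fc: "\<And>c x. f (c *\<^sub>C x) = c * f x"
  shows "\<exists>y. \<forall>x. f x = cinner y x"
proof (cases "\<forall>x. f x = 0")
  case True then show ?thesis by (intro exI[of _ 0]) simp
next
  case False
  then obtain x0 where x0: "f x0 \<noteq> 0" by blast
  define K where "K = {x. f x = 0}"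
  have sub: "csubspace K"
    unfolding csubspace_def K_def using fc bl_zero[OF f] bl_add[OF f] by auto
  have "x0 \<notin> closure K"
  proof
    assume "x0 \<in> closure K"
    then obtain r where r: "\<And>n. r n \<in> K" "r \<longlonglongrightarrow> x0" unfolding closure_sequential by blast
    have "(\<lambda>n. f (r n)) \<longlonglongrightarrow> f x0" by (rule bounded_linear.tendsto[OF f r(2)])
    moreover have "(\<lambda>n. f (r n)) = (\<lambda>n. 0)" using r(1) by (auto simp: K_def)
    ultimately have "f x0 = 0" using LIMSEQ_unique tendsto_const by metis
    with x0 show False by simp
  qed
  from orth_exists[OF sub this] obtain z where z: "z \<noteq> 0" "\<And>k. k \<in> K \<Longrightarrow> cinner k z = 0" by blast
  have fz: "f z \<noteq> 0"
  proof
    assume "f z = 0"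
    then have "cinner z z = 0" using z(2) by (simp add: K_def)
    with z(1) show False by simp
  qed
  define nz where "nz = (norm z)\<^sup>2"
  have nz: "cinner z z = complex_of_real nz" by (simp add: nz_def cinner_self_norm)
  have nz0: "complex_of_real nz \<noteq> 0" using z(1) by (simp add: nz_def)
  define y where "y = (cnj (f z) / complex_of_real nz) *\<^sub>C z"
  show ?thesis
  proof (intro exI allI)
    fix x
    define k where "k = x - (f x / f z) *\<^sub>C z"
    have "f k = f x - (f x / f z) * f z"
      unfolding k_def by (simp add: bl_diff[OF f] fc)
    also have "\<dots> = 0" using fz by simp
    finally have "k \<in> K" by (simp add: K_def)
    then have "cinner k z = 0" by (rule z(2))
    then have "cinner x z = cnj (f x / f z) * complex_of_real nz"
      by (simp add: k_def cinner_diff_left cinner_scaleC_left nz)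
    then have xz: "cinner z x = (f x / f z) * complex_of_real nz"
      by (subst cinner_commute) simp
    have "cinner y x = (f z / complex_of_real nz) * cinner z x"
      by (simp add: y_def cinner_scaleC_left)
    also have "\<dots> = f x" using fz nz0 by (simp add: xz)
    finally show "f x = cinner y x" by simp
  qed
qed

lemma bounded_opD:
  assumes "bounded_op T"
  shows "bounded_linear T" "T (c *\<^sub>C x) = c *\<^sub>C T x" "T (x + y) = T x + T y"
    "T (x - y) = T x - T y" "T 0 = 0"
  using assms unfolding bounded_op_def
  by (auto simp: bl_add bl_diff bl_zero)

lemma adjoint_exists:
  assumes T: "bounded_op T"
  shows "\<exists>S. \<forall>x y. cinner (T x) y = cinner x (S y)"
proof -
  have TL: "bounded_linear T" using T by (simp add: bounded_op_def)
  obtain KT where KT: "\<And>x. norm (T x) \<le> norm x * KT"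
    using bounded_linear.bounded[OF TL] by blast
  have "\<forall>y. \<exists>s. \<forall>x. cinner (T x) y = cinner x s"
  proof
    fix y
    define g where "g = (\<lambda>x. cinner y (T x))"
    have "bounded_linear g"
    proof (rule bounded_linear_intro[where K = "norm y * KT"])
      show "g (a + b) = g a + g b" for a b
        by (simp add: g_def bounded_opD[OF T] cinner_add_right)
      show "g (r *\<^sub>R a) = r *\<^sub>R g a" for r a
        by (simp add: g_def scaleR_scaleC bounded_opD[OF T] cinner_scaleC_right scaleR_conv_of_real)
      show "norm (g a) \<le> norm a * (norm y * KT)" for a
      proof -
        have "norm (g a) \<le> norm y * norm (T a)" unfolding g_def by (rule cinner_cauchy_schwarz)
        also have "\<dots> \<le> norm y * (norm a * KT)" by (rule mult_left_mono[OF KT]) simp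
        finally show ?thesis by (simp add: mult_ac)
      qed
    qed
    moreover have "g (c *\<^sub>C x) = c * g x" for c x
      by (simp add: g_def bounded_opD[OF T] cinner_scaleC_right)
    ultimately obtain s where s: "\<And>x. g x = cinner s x" using riesz by blast
    show "\<exists>s. \<forall>x. cinner (T x) y = cinner x s"
    proof (intro exI allI)
      fix x
      have "cinner (T x) y = cnj (g x)" unfolding g_def by (subst cinner_commute) simp
      also have "\<dots> = cinner x s" by (simp add: s cinner_commute[of s x])
      finally show "cinner (T x) y = cinner x s" .
    qed
  qed
  then show ?thesis by metis
qed

lemma adjoint_prop:
  assumes "bounded_op T" shows "cinner (T x) y = cinner x (adjoint T y)"
proof -
  obtain S where S: "\<forall>x y. cinner (T x) y = cinner x (S y)" using adjoint_exists[OF assms] by blast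
  have "\<exists>!S. \<forall>x y. cinner (T x) y = cinner x (S y)"
  proof (rule ex1I[of _ S])
    show "\<forall>x y. cinner (T x) y = cinner x (S y)" by (rule S)
    fix S' assume S': "\<forall>x y. cinner (T x) y = cinner x (S' y)"
    show "S' = S"
    proof
      fix y show "S' y = S y" by (rule cinner_ext) (metis S S')
    qed
  qed
  then have "\<forall>x y. cinner (T x) y = cinner x (adjoint T y)"
    unfolding adjoint_def by (rule theI')
  then show ?thesis by blast
qed

lemma adjoint_eq:
  assumes "bounded_op T" "\<And>x y. cinner (T x) y = cinner x (S y)"
  shows "adjoint T = S"
proof
  fix y show "adjoint T y = S y"
    by (rule cinner_ext) (metis assms adjoint_prop)
qed

lemma adjoint_prop2:
  assumes "bounded_op T" shows "cinner (adjoint T y) x = cinner y (T x)"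
  using adjoint_prop[OF assms, of x y] by (metis cinner_commute)

lemma adjoint_bounded:
  assumes T: "bounded_op T" shows "bounded_op (adjoint T)"
proof -
  let ?S = "adjoint T"
  have TL: "bounded_linear T" using T by (simp add: bounded_op_def)
  obtain KT where KT: "\<And>x. norm (T x) \<le> norm x * KT"
    using bounded_linear.bounded[OF TL] by blast
  have add: "?S (a + b) = ?S a + ?S b" for a b
    by (rule cinner_ext) (simp add: adjoint_prop[OF T, symmetric] cinner_add_right)
  have sc: "?S (c *\<^sub>C a) = c *\<^sub>C ?S a" for c a
    by (rule cinner_ext) (simp add: adjoint_prop[OF T, symmetric] cinner_scaleC_right)
  have "bounded_linear ?S"
  proof (rule bounded_linear_intro[where K = KT])
    show "?S (a + b) = ?S a + ?S b" for a b by (rule add)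
    show "?S (r *\<^sub>R a) = r *\<^sub>R ?S a" for r a by (simp add: scaleR_scaleC sc)
    show "norm (?S y) \<le> norm y * KT" for y
    proof (cases "?S y = 0")
      case True
      show ?thesis
      proof (cases "y = 0")
        case True2: True
        then show ?thesis using True by simp
      next
        case False
        have "0 \<le> norm y * KT" using KT[of y] norm_ge_zero order_trans by blast
        then show ?thesis using True by simp
      qed
    next
      case False
      have "(norm (?S y))\<^sup>2 = Re (cinner (T (?S y)) y)"
        by (simp add: adjoint_prop[OF T] cinner_real_self)
      also have "\<dots> \<le> norm (T (?S y)) * norm y" by (rule Re_cinner_le)
      also have "\<dots> \<le> (norm (?S y) * KT) * norm y" by (rule mult_right_mono[OF KT]) simp
      finally have "norm (?S y) * norm (?S y) \<le> norm (?S y) * (norm y * KT)"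
        by (simp add: power2_eq_square mult_ac)
      then show ?thesis using False by simp
    qed
  qed
  then show ?thesis unfolding bounded_op_def using sc by blast
qed


lemma sum_list_swap: "(\<Sum>a\<leftarrow>xs. \<Sum>b\<leftarrow>ys. f a b) = (\<Sum>b\<leftarrow>ys. \<Sum>a\<leftarrow>xs. f a b)"
  for f :: "_ \<Rightarrow> _ \<Rightarrow> 'b::comm_monoid_add"
proof (induction xs)
  case Nil then show ?case by (induction ys) simp_all
next
  case (Cons a xs)
  have "(\<Sum>b\<leftarrow>ys. f a b + (\<Sum>a\<leftarrow>xs. f a b)) = (\<Sum>b\<leftarrow>ys. f a b) + (\<Sum>b\<leftarrow>ys. \<Sum>a\<leftarrow>xs. f a b)"
    using sum_list_addf[of "f a" "\<lambda>b. \<Sum>a\<leftarrow>xs. f a b" ys] by simp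
  then show ?case using Cons by simp
qed

lemma scaleC_sum_list: "c *\<^sub>C sum_list (map f xs) = sum_list (map (\<lambda>a. c *\<^sub>C f a) xs)"
  by (induction xs) (simp_all add: scaleC_add_right)

lemma bop_sum_list: "bounded_op T \<Longrightarrow> T (sum_list (map f xs)) = sum_list (map (\<lambda>a. T (f a)) xs)"
  by (induction xs) (simp_all add: bounded_opD)

lemma sum_list_neg: "sum_list (map (\<lambda>a. - f a) xs) = - sum_list (map f xs)"
  for f :: "_ \<Rightarrow> 'b::ab_group_add"
  by (induction xs) simp_all

lemma bop_funpow:
  assumes "bounded_op T"
  shows "(T ^^ n) (c *\<^sub>C x) = c *\<^sub>C (T ^^ n) x" "(T ^^ n) (x + y) = (T ^^ n) x + (T ^^ n) y"
  by (induction n) (simp_all add: bounded_opD[OF assms])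

locale nsetting =
  fixes N S :: "'a::chilbert_space \<Rightarrow> 'a"
  assumes Nb: "bounded_op N" and Sb: "bounded_op S"
    and adj: "\<And>x y. cinner (N x) y = cinner x (S y)"
    and comm: "\<And>x. N (S x) = S (N x)"
begin

lemma adj2: "cinner (S x) y = cinner x (N y)"
  using adj[of y x] by (metis cinner_commute)

definition Mop :: "nat \<times> nat \<Rightarrow> 'a \<Rightarrow> 'a" where
  "Mop k x = (N ^^ fst k) ((S ^^ snd k) x)"

lemma S_pow_N: "(S ^^ j) (N x) = N ((S ^^ j) x)"
  by (induction j) (simp_all add: comm)

lemma S_pow_N_pow: "(S ^^ j) ((N ^^ i) x) = (N ^^ i) ((S ^^ j) x)"
  by (induction i) (simp_all add: S_pow_N)

lemma Mop_comp: "Mop k (Mop l x) = Mop (fst k + fst l, snd k + snd l) x"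
  by (simp add: Mop_def S_pow_N_pow funpow_add)

lemma adj_Npow: "cinner ((N ^^ i) x) y = cinner x ((S ^^ i) y)"
  by (induction i arbitrary: x) (simp_all add: adj funpow_swap1)

lemma adj_Spow: "cinner ((S ^^ i) x) y = cinner x ((N ^^ i) y)"
  by (induction i arbitrary: x) (simp_all add: adj2 funpow_swap1)

lemma Mop_adj: "cinner (Mop k x) y = cinner x (Mop (prod.swap k) y)"
  by (simp add: Mop_def adj_Npow adj_Spow)

lemma Mop_scaleC: "Mop k (c *\<^sub>C x) = c *\<^sub>C Mop k x"
  by (simp add: Mop_def bop_funpow[OF Nb] bop_funpow[OF Sb])

lemma N_Mop: "N (Mop k x) = Mop (Suc (fst k), snd k) x"
  by (simp add: Mop_def)

lemma S_Npow: "S ((N ^^ i) x) = (N ^^ i) (S x)"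
  using S_pow_N_pow[of 1 i x] by simp

lemma S_Mop: "S (Mop k x) = Mop (fst k, Suc (snd k)) x"
  by (simp add: Mop_def S_Npow)

definition vec :: "'a \<Rightarrow> (complex \<times> (nat \<times> nat)) list \<Rightarrow> 'a" where
  "vec w xs = sum_list (map (\<lambda>(c,k). c *\<^sub>C Mop k w) xs)"

definition cvec :: "'a \<Rightarrow> (complex \<times> (nat \<times> nat)) list \<Rightarrow> 'a" where
  "cvec w xs = sum_list (map (\<lambda>(c,k). cnj c *\<^sub>C Mop (prod.swap k) w) xs)"

lemma cinner_vec:
  "cinner (vec w xs) (vec w ys) = (\<Sum>a\<leftarrow>xs. \<Sum>b\<leftarrow>ys. cnj (fst a) * fst b * cinner (Mop (snd a) w) (Mop (snd b) w))"
  unfolding vec_def cinner_sum_left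
  unfolding cinner_sum_right
  by (simp add: case_prod_beta cinner_scaleC_left cinner_scaleC_right mult_ac)

lemma cinner_cvec:
  "cinner (cvec w xs) (cvec w ys) = (\<Sum>a\<leftarrow>xs. \<Sum>b\<leftarrow>ys. fst a * cnj (fst b) * cinner (Mop (prod.swap (snd a)) w) (Mop (prod.swap (snd b)) w))"
  unfolding cvec_def cinner_sum_left
  unfolding cinner_sum_right
  by (simp add: case_prod_beta cinner_scaleC_left cinner_scaleC_right mult_ac)

lemma Mop_swap_inner: "cinner (Mop (prod.swap k) w) (Mop (prod.swap l) w) = cinner (Mop l w) (Mop k w)"
  by (simp add: Mop_adj Mop_comp add.commute)

lemma norm_cvec: "norm (cvec w xs) = norm (vec w xs)"
proof -
  have "cinner (cvec w xs) (cvec w xs) = cinner (vec w xs) (vec w xs)"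
    unfolding cinner_cvec cinner_vec Mop_swap_inner
    by (subst sum_list_swap) (simp add: mult_ac)
  then have "(norm (cvec w xs))\<^sup>2 = (norm (vec w xs))\<^sup>2" by (metis cinner_real_self(2))
  then show ?thesis by (simp add: power2_eq_iff_nonneg)
qed

end

definition good :: "('a::chilbert_space \<Rightarrow> 'a) \<Rightarrow> ('a \<Rightarrow> 'a) \<Rightarrow> ('a \<times> 'a) set \<Rightarrow> bool" where
  "good N S G \<longleftrightarrow>
    (\<forall>x y y'. (x,y) \<in> G \<longrightarrow> (x,y') \<in> G \<longrightarrow> y = y') \<and>
    (\<forall>x y x' y'. (x,y) \<in> G \<longrightarrow> (x',y') \<in> G \<longrightarrow> (x + x', y + y') \<in> G) \<and>
    (\<forall>c x y. (x,y) \<in> G \<longrightarrow> (c *\<^sub>C x, cnj c *\<^sub>C y) \<in> G) \<and>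
    (\<forall>x y. (x,y) \<in> G \<longrightarrow> norm y = norm x) \<and>
    (\<forall>x y. (x,y) \<in> G \<longrightarrow> (y,x) \<in> G) \<and>
    (\<forall>x y. (x,y) \<in> G \<longrightarrow> (N x, S y) \<in> G \<and> (S x, N y) \<in> G)"

context nsetting begin

lemma vec_append: "vec w (xs @ ys) = vec w xs + vec w ys"
  by (simp add: vec_def)
lemma cvec_append: "cvec w (xs @ ys) = cvec w xs + cvec w ys"
  by (simp add: cvec_def)

lemma vec_neg: "vec w (map (\<lambda>(c,k). (-c,k)) xs) = - vec w xs"
  unfolding vec_def using sum_list_neg[of "\<lambda>(c,k). c *\<^sub>C Mop k w" xs]
  by (simp add: split_def comp_def scaleC_minus_left)
lemma cvec_neg: "cvec w (map (\<lambda>(c,k). (-c,k)) xs) = - cvec w xs"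
  unfolding cvec_def using sum_list_neg[of "\<lambda>(c,k). cnj c *\<^sub>C Mop (prod.swap k) w" xs]
  by (simp add: split_def comp_def scaleC_minus_left)

lemma vec_scale: "vec w (map (\<lambda>(c,k). (a * c,k)) xs) = a *\<^sub>C vec w xs"
  unfolding vec_def scaleC_sum_list by (simp add: split_def comp_def scaleC_scaleC)
lemma cvec_scale: "cvec w (map (\<lambda>(c,k). (a * c,k)) xs) = cnj a *\<^sub>C cvec w xs"
  unfolding cvec_def scaleC_sum_list by (simp add: split_def comp_def scaleC_scaleC)

lemma vec_inv: "vec w (map (\<lambda>(c,k). (cnj c, prod.swap k)) xs) = cvec w xs"
  unfolding vec_def cvec_def by (simp add: split_def comp_def)
lemma cvec_inv: "cvec w (map (\<lambda>(c,k). (cnj c, prod.swap k)) xs) = vec w xs"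
  unfolding vec_def cvec_def by (simp add: split_def comp_def)

lemma vec_N: "vec w (map (\<lambda>(c,k). (c, (Suc (fst k), snd k))) xs) = N (vec w xs)"
  unfolding vec_def bop_sum_list[OF Nb] by (simp add: split_def comp_def bounded_opD[OF Nb] N_Mop)
lemma cvec_N: "cvec w (map (\<lambda>(c,k). (c, (Suc (fst k), snd k))) xs) = S (cvec w xs)"
  unfolding cvec_def bop_sum_list[OF Sb] by (simp add: split_def comp_def bounded_opD[OF Sb] S_Mop)
lemma vec_S: "vec w (map (\<lambda>(c,k). (c, (fst k, Suc (snd k)))) xs) = S (vec w xs)"
  unfolding vec_def bop_sum_list[OF Sb] by (simp add: split_def comp_def bounded_opD[OF Sb] S_Mop)
lemma cvec_S: "cvec w (map (\<lambda>(c,k). (c, (fst k, Suc (snd k)))) xs) = N (cvec w xs)"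
  unfolding cvec_def bop_sum_list[OF Nb] by (simp add: split_def comp_def bounded_opD[OF Nb] N_Mop)

lemma vec_welldef:
  assumes "vec w xs = vec w ys" shows "cvec w xs = cvec w ys"
proof -
  define zs where "zs = xs @ map (\<lambda>(c,k). (-c,k)) ys"
  have "vec w zs = 0" using assms by (simp add: zs_def vec_append vec_neg)
  then have "cvec w zs = 0" using norm_cvec[of w zs] by simp
  then show ?thesis by (simp add: zs_def cvec_append cvec_neg)
qed

definition GW :: "'a \<Rightarrow> ('a \<times> 'a) set" where
  "GW w = {(vec w xs, cvec w xs) | xs. True}"

lemma mem_GW: "(x, y) \<in> GW w \<longleftrightarrow> (\<exists>xs. x = vec w xs \<and> y = cvec w xs)"
  unfolding GW_def by blast

lemma GW_good: "good N S (GW w)"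
  unfolding good_def
proof (intro conjI allI impI)
  fix x y y' assume "(x, y) \<in> GW w" "(x, y') \<in> GW w"
  then obtain xs ys where "x = vec w xs" "y = cvec w xs" "x = vec w ys" "y' = cvec w ys"
    unfolding mem_GW by blast
  then show "y = y'" using vec_welldef by metis
next
  fix x y x' y' assume "(x, y) \<in> GW w" "(x', y') \<in> GW w"
  then obtain xs ys where "x = vec w xs" "y = cvec w xs" "x' = vec w ys" "y' = cvec w ys"
    unfolding mem_GW by blast
  then show "(x + x', y + y') \<in> GW w"
    unfolding mem_GW by (intro exI[of _ "xs @ ys"]) (simp add: vec_append cvec_append)
next
  fix c x y assume "(x, y) \<in> GW w"
  then obtain xs where "x = vec w xs" "y = cvec w xs" unfolding mem_GW by blast
  then show "(c *\<^sub>C x, cnj c *\<^sub>C y) \<in> GW w"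
    unfolding mem_GW by (intro exI[of _ "map (\<lambda>(d,k). (c * d,k)) xs"]) (simp add: vec_scale cvec_scale)
next
  fix x y assume "(x, y) \<in> GW w"
  then obtain xs where "x = vec w xs" "y = cvec w xs" unfolding mem_GW by blast
  then show "norm y = norm x" using norm_cvec by simp
next
  fix x y assume "(x, y) \<in> GW w"
  then obtain xs where "x = vec w xs" "y = cvec w xs" unfolding mem_GW by blast
  then show "(y, x) \<in> GW w"
    unfolding mem_GW by (intro exI[of _ "map (\<lambda>(c,k). (cnj c, prod.swap k)) xs"]) (simp add: vec_inv cvec_inv)
next
  fix x y assume "(x, y) \<in> GW w"
  then obtain xs where "x = vec w xs" "y = cvec w xs" unfolding mem_GW by blast
  then show "(N x, S y) \<in> GW w"
    unfolding mem_GW by (intro exI[of _ "map (\<lambda>(c,k). (c, (Suc (fst k), snd k))) xs"]) (simp add: vec_N cvec_N)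
next
  fix x y assume "(x, y) \<in> GW w"
  then obtain xs where "x = vec w xs" "y = cvec w xs" unfolding mem_GW by blast
  then show "(S x, N y) \<in> GW w"
    unfolding mem_GW by (intro exI[of _ "map (\<lambda>(c,k). (c, (fst k, Suc (snd k)))) xs"]) (simp add: vec_S cvec_S)
qed

lemma GW_zero: "(0, 0) \<in> GW w"
  unfolding mem_GW by (intro exI[of _ "[]"]) (simp add: vec_def cvec_def)

lemma GW_self: "(w, w) \<in> GW w"
  unfolding mem_GW by (intro exI[of _ "[(1, (0, 0))]"]) (simp add: vec_def cvec_def Mop_def scaleC_one)

end

lemma goodD:
  assumes "good N S G"
  shows "(x,y) \<in> G \<Longrightarrow> (x,y') \<in> G \<Longrightarrow> y = y'"
    "(x,y) \<in> G \<Longrightarrow> (x',y') \<in> G \<Longrightarrow> (x + x', y + y') \<in> G"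
    "(x,y) \<in> G \<Longrightarrow> (c *\<^sub>C x, cnj c *\<^sub>C y) \<in> G"
    "(x,y) \<in> G \<Longrightarrow> norm y = norm x"
    "(x,y) \<in> G \<Longrightarrow> (y,x) \<in> G"
    "(x,y) \<in> G \<Longrightarrow> (N x, S y) \<in> G"
    "(x,y) \<in> G \<Longrightarrow> (S x, N y) \<in> G"
  using assms unfolding good_def
  by (metis (no_types))+

lemma goodI:
  assumes "\<And>x y y'. (x,y) \<in> G \<Longrightarrow> (x,y') \<in> G \<Longrightarrow> y = y'"
    "\<And>x y x' y'. (x,y) \<in> G \<Longrightarrow> (x',y') \<in> G \<Longrightarrow> (x + x', y + y') \<in> G"
    "\<And>c x y. (x,y) \<in> G \<Longrightarrow> (c *\<^sub>C x, cnj c *\<^sub>C y) \<in> G"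
    "\<And>x y. (x,y) \<in> G \<Longrightarrow> norm y = norm x"
    "\<And>x y. (x,y) \<in> G \<Longrightarrow> (y,x) \<in> G"
    "\<And>x y. (x,y) \<in> G \<Longrightarrow> (N x, S y) \<in> G"
    "\<And>x y. (x,y) \<in> G \<Longrightarrow> (S x, N y) \<in> G"
  shows "good N S G"
  unfolding good_def
  apply (intro conjI allI impI)
        apply (erule (1) assms(1))
       apply (erule (1) assms(2))
      apply (erule assms(3))
     apply (erule assms(4))
    apply (erule assms(5))
   apply (erule assms(6))
  apply (erule assms(7))
  done

lemma chain_two: "chain\<^sub>\<subseteq> C \<Longrightarrow> p \<in> \<Union>C \<Longrightarrow> q \<in> \<Union>C \<Longrightarrow> \<exists>X\<in>C. p \<in> X \<and> q \<in> X"
  unfolding chain_subset_def by blast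

lemma good_Union:
  assumes ch: "chain\<^sub>\<subseteq> C" and g: "\<And>G. G \<in> C \<Longrightarrow> good N S G"
  shows "good N S (\<Union>C)"
proof (rule goodI)
  fix x y y' assume "(x,y) \<in> \<Union>C" "(x,y') \<in> \<Union>C"
  then obtain X where "X \<in> C" "(x,y) \<in> X" "(x,y') \<in> X" using chain_two[OF ch] by blast
  then show "y = y'" using goodD(1)[OF g] by blast
next
  fix x y x' y' assume "(x,y) \<in> \<Union>C" "(x',y') \<in> \<Union>C"
  then obtain X where "X \<in> C" "(x,y) \<in> X" "(x',y') \<in> X" using chain_two[OF ch] by blast
  then show "(x + x', y + y') \<in> \<Union>C" using goodD(2)[OF g] by blast
next
  fix c x y assume "(x,y) \<in> \<Union>C"
  then obtain X where "X \<in> C" "(x,y) \<in> X" by blast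
  then show "(c *\<^sub>C x, cnj c *\<^sub>C y) \<in> \<Union>C" using goodD(3)[OF g] by blast
next
  fix x y assume "(x,y) \<in> \<Union>C"
  then obtain X where "X \<in> C" "(x,y) \<in> X" by blast
  then show "norm y = norm x" using goodD(4)[OF g] by blast
next
  fix x y assume "(x,y) \<in> \<Union>C"
  then obtain X where "X \<in> C" "(x,y) \<in> X" by blast
  then show "(y, x) \<in> \<Union>C" using goodD(5)[OF g] by blast
next
  fix x y assume "(x,y) \<in> \<Union>C"
  then obtain X where "X \<in> C" "(x,y) \<in> X" by blast
  then show "(N x, S y) \<in> \<Union>C" using goodD(6)[OF g] by blast
next
  fix x y assume "(x,y) \<in> \<Union>C"
  then obtain X where "X \<in> C" "(x,y) \<in> X" by blast
  then show "(S x, N y) \<in> \<Union>C" using goodD(7)[OF g] by blast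
qed

lemma good_zero: "good N S G \<Longrightarrow> (x,y) \<in> G \<Longrightarrow> (0,0) \<in> G"
  using goodD(3)[of N S G x y 0] by simp

lemma good_diff: "good N S G \<Longrightarrow> (x,y) \<in> G \<Longrightarrow> (x',y') \<in> G \<Longrightarrow> (x - x', y - y') \<in> G"
  using goodD(2)[of N S G x y "(-1) *\<^sub>C x'" "(-1) *\<^sub>C y'"] goodD(3)[of N S G x' y' "-1"]
  by (simp add: scaleC_minus1)

lemma good_csubspace:
  assumes "good N S G" "(u, v) \<in> G" shows "csubspace (fst ` G)"
  unfolding csubspace_def
proof (intro conjI ballI allI)
  show "0 \<in> fst ` G" using good_zero[OF assms] by force
next
  fix x y assume "x \<in> fst ` G" "y \<in> fst ` G"
  then obtain x' y' where "(x,x') \<in> G" "(y,y') \<in> G" by force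
  then show "x + y \<in> fst ` G" using goodD(2)[OF assms(1)] by force
next
  fix c x assume "x \<in> fst ` G"
  then obtain x' where "(x,x') \<in> G" by force
  then show "c *\<^sub>C x \<in> fst ` G" using goodD(3)[OF assms(1)] by force
qed

definition glue :: "('a::chilbert_space \<times> 'a) set \<Rightarrow> ('a \<times> 'a) set \<Rightarrow> ('a \<times> 'a) set" where
  "glue G H = {(x + y, x' + y') | x x' y y'. (x,x') \<in> G \<and> (y,y') \<in> H}"

lemma mem_glue: "p \<in> glue G H \<longleftrightarrow> (\<exists>x x' y y'. p = (x + y, x' + y') \<and> (x,x') \<in> G \<and> (y,y') \<in> H)"
  unfolding glue_def by blast

context nsetting begin

lemma glue_good:
  assumes G: "good N S G" and H: "good N S H"
    and orth: "\<And>x y. x \<in> fst ` G \<Longrightarrow> y \<in> fst ` H \<Longrightarrow> cinner y x = 0"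
  shows "good N S (glue G H)"
proof (rule goodI)
  fix p q q' assume "(p,q) \<in> glue G H" "(p,q') \<in> glue G H"
  then obtain x1 x1' y1 y1' x2 x2' y2 y2' where
    a: "p = x1 + y1" "q = x1' + y1'" "(x1,x1') \<in> G" "(y1,y1') \<in> H"
    and b: "p = x2 + y2" "q' = x2' + y2'" "(x2,x2') \<in> G" "(y2,y2') \<in> H"
    unfolding mem_glue by blast
  have "(x1 - x2, x1' - x2') \<in> G" using good_diff[OF G a(3) b(3)] .
  moreover have "(y2 - y1, y2' - y1') \<in> H" using good_diff[OF H b(4) a(4)] .
  moreover have eq: "x1 - x2 = y2 - y1" using a(1) b(1) by (simp add: algebra_simps)
  ultimately have "cinner (x1 - x2) (x1 - x2) = 0" using orth by force
  then have "x1 = x2" by simp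
  with eq have "y1 = y2" by simp
  show "q = q'" using a b \<open>x1 = x2\<close> \<open>y1 = y2\<close> goodD(1)[OF G] goodD(1)[OF H] by metis
next
  fix p q p' q' assume "(p,q) \<in> glue G H" "(p',q') \<in> glue G H"
  then obtain x1 x1' y1 y1' x2 x2' y2 y2' where
    a: "p = x1 + y1" "q = x1' + y1'" "(x1,x1') \<in> G" "(y1,y1') \<in> H"
    and b: "p' = x2 + y2" "q' = x2' + y2'" "(x2,x2') \<in> G" "(y2,y2') \<in> H"
    unfolding mem_glue by blast
  have "(x1 + x2, x1' + x2') \<in> G" using goodD(2)[OF G a(3) b(3)] .
  moreover have "(y1 + y2, y1' + y2') \<in> H" using goodD(2)[OF H a(4) b(4)] .
  moreover have "p + p' = (x1 + x2) + (y1 + y2)" "q + q' = (x1' + x2') + (y1' + y2')"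
    using a b by (simp_all add: algebra_simps)
  ultimately show "(p + p', q + q') \<in> glue G H" unfolding mem_glue by blast
next
  fix c p q assume "(p,q) \<in> glue G H"
  then obtain x1 x1' y1 y1' where
    a: "p = x1 + y1" "q = x1' + y1'" "(x1,x1') \<in> G" "(y1,y1') \<in> H"
    unfolding mem_glue by blast
  have "c *\<^sub>C p = c *\<^sub>C x1 + c *\<^sub>C y1" "cnj c *\<^sub>C q = cnj c *\<^sub>C x1' + cnj c *\<^sub>C y1'"
    using a by (simp_all add: scaleC_add_right)
  then show "(c *\<^sub>C p, cnj c *\<^sub>C q) \<in> glue G H"
    unfolding mem_glue using goodD(3)[OF G a(3)] goodD(3)[OF H a(4)] by blast
next
  fix p q assume "(p,q) \<in> glue G H"
  then obtain x1 x1' y1 y1' where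
    a: "p = x1 + y1" "q = x1' + y1'" "(x1,x1') \<in> G" "(y1,y1') \<in> H"
    unfolding mem_glue by blast
  have o1: "cinner x1 y1 = 0"
  proof -
    have "cinner y1 x1 = 0" using orth a(3,4) by force
    then show ?thesis by (subst cinner_commute) simp
  qed
  have o2: "cinner x1' y1' = 0"
  proof -
    have "cinner y1' x1' = 0" using orth goodD(5)[OF G a(3)] goodD(5)[OF H a(4)] by force
    then show ?thesis by (subst cinner_commute) simp
  qed
  have "(norm q)\<^sup>2 = (norm x1')\<^sup>2 + (norm y1')\<^sup>2" using pythagoras[OF o2] a(2) by simp
  also have "\<dots> = (norm x1)\<^sup>2 + (norm y1)\<^sup>2" using goodD(4)[OF G a(3)] goodD(4)[OF H a(4)] by simp
  also have "\<dots> = (norm p)\<^sup>2" using pythagoras[OF o1] a(1) by simp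
  finally show "norm q = norm p" by (simp add: power2_eq_iff_nonneg)
next
  fix p q assume "(p,q) \<in> glue G H"
  then obtain x1 x1' y1 y1' where
    a: "p = x1 + y1" "q = x1' + y1'" "(x1,x1') \<in> G" "(y1,y1') \<in> H"
    unfolding mem_glue by blast
  then show "(q, p) \<in> glue G H"
    unfolding mem_glue using goodD(5)[OF G a(3)] goodD(5)[OF H a(4)] by blast
next
  fix p q assume "(p,q) \<in> glue G H"
  then obtain x1 x1' y1 y1' where
    a: "p = x1 + y1" "q = x1' + y1'" "(x1,x1') \<in> G" "(y1,y1') \<in> H"
    unfolding mem_glue by blast
  have "N p = N x1 + N y1" "S q = S x1' + S y1'"
    using a by (simp_all add: bounded_opD[OF Nb] bounded_opD[OF Sb])
  then show "(N p, S q) \<in> glue G H"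
    unfolding mem_glue using goodD(6)[OF G a(3)] goodD(6)[OF H a(4)] by blast
next
  fix p q assume "(p,q) \<in> glue G H"
  then obtain x1 x1' y1 y1' where
    a: "p = x1 + y1" "q = x1' + y1'" "(x1,x1') \<in> G" "(y1,y1') \<in> H"
    unfolding mem_glue by blast
  have "S p = S x1 + S y1" "N q = N x1' + N y1'"
    using a by (simp_all add: bounded_opD[OF Nb] bounded_opD[OF Sb])
  then show "(S p, N q) \<in> glue G H"
    unfolding mem_glue using goodD(7)[OF G a(3)] goodD(7)[OF H a(4)] by blast
qed

end

context nsetting begin

lemma dom_Npow: "good N S G \<Longrightarrow> x \<in> fst ` G \<Longrightarrow> (N ^^ i) x \<in> fst ` G"
proof (induction i)
  case 0 then show ?case by simp
next
  case (Suc i)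
  then obtain y where "((N ^^ i) x, y) \<in> G" by force
  then have "(N ((N ^^ i) x), S y) \<in> G" using goodD(6)[OF Suc.prems(1)] by blast
  then show ?case by force
qed

lemma dom_Spow: "good N S G \<Longrightarrow> x \<in> fst ` G \<Longrightarrow> (S ^^ i) x \<in> fst ` G"
proof (induction i)
  case 0 then show ?case by simp
next
  case (Suc i)
  then obtain y where "((S ^^ i) x, y) \<in> G" by force
  then have "(S ((S ^^ i) x), N y) \<in> G" using goodD(7)[OF Suc.prems(1)] by blast
  then show ?case by force
qed

lemma dom_Mop: "good N S G \<Longrightarrow> x \<in> fst ` G \<Longrightarrow> Mop k x \<in> fst ` G"
  unfolding Mop_def by (intro dom_Npow dom_Spow)

lemma orth_GW:
  assumes G: "good N S G" and w: "\<And>v. v \<in> fst ` G \<Longrightarrow> cinner v w = 0"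
    and x: "x \<in> fst ` G" and y: "y \<in> fst ` GW w"
  shows "cinner y x = 0"
proof -
  obtain xs where yv: "y = vec w xs" using y mem_GW by force
  have "cinner (Mop k w) x = 0" for k
  proof -
    have "cinner (Mop k w) x = cinner w (Mop (prod.swap k) x)" by (rule Mop_adj)
    also have "\<dots> = cnj (cinner (Mop (prod.swap k) x) w)" by (rule cinner_commute)
    also have "cinner (Mop (prod.swap k) x) w = 0" by (rule w[OF dom_Mop[OF G x]])
    finally show ?thesis by simp
  qed
  then show ?thesis
    unfolding yv vec_def cinner_sum_left by (simp add: split_def cinner_scaleC_left)
qed

lemma exists_dense: "\<exists>G. good N S G \<and> (u, u) \<in> G \<and> closure (fst ` G) = UNIV"
proof -
  define A where "A = {G. good N S G \<and> (u, u) \<in> G}"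
  have base: "GW u \<in> A" unfolding A_def using GW_good[of u] GW_self[of u] by simp
  have "\<forall>C\<in>chains A. \<exists>U\<in>A. \<forall>X\<in>C. X \<subseteq> U"
  proof
    fix C assume C: "C \<in> chains A"
    show "\<exists>U\<in>A. \<forall>X\<in>C. X \<subseteq> U"
    proof (cases "C = {}")
      case True then show ?thesis using base by blast
    next
      case False
      have ch: "chain\<^sub>\<subseteq> C" and CA: "C \<subseteq> A" using C unfolding chains_def by blast+
      have "good N S (\<Union>C)"
      proof (rule good_Union[OF ch])
        fix G assume "G \<in> C" then have "G \<in> A" using CA by blast
        then show "good N S G" unfolding A_def by blast
      qed
      moreover have "(u, u) \<in> \<Union>C"
      proof -
        obtain X where "X \<in> C" using False by blast
        then have "X \<in> A" using CA by blast
        then have "(u,u) \<in> X" unfolding A_def by blast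
        then show ?thesis using \<open>X \<in> C\<close> by blast
      qed
      ultimately have "\<Union>C \<in> A" by (simp add: A_def)
      then show ?thesis by blast
    qed
  qed
  from Zorn_Lemma2[OF this] obtain M where M: "M \<in> A" and max: "\<forall>X\<in>A. M \<subseteq> X \<longrightarrow> X = M"
    by blast
  have Mg: "good N S M" and Mu: "(u, u) \<in> M" using M unfolding A_def by blast+
  have "closure (fst ` M) = UNIV"
  proof (rule ccontr)
    assume "closure (fst ` M) \<noteq> UNIV"
    then obtain x where "x \<notin> closure (fst ` M)" by blast
    from orth_exists[OF good_csubspace[OF Mg Mu] this]
    obtain w where w: "w \<noteq> 0" "\<And>v. v \<in> fst ` M \<Longrightarrow> cinner v w = 0" by blast
    define M' where "M' = glue M (GW w)"
    have g': "good N S M'" unfolding M'_def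
      by (rule glue_good[OF Mg GW_good]) (rule orth_GW[OF Mg w(2)])
    have z: "(0, 0) \<in> M" by (rule good_zero[OF Mg Mu])
    have sub: "M \<subseteq> M'"
    proof
      fix p assume "p \<in> M"
      then obtain a b where p: "p = (a, b)" "(a, b) \<in> M" by (cases p) auto
      have "(a + 0, b + 0) \<in> M'" unfolding M'_def mem_glue using p(2) GW_zero by blast
      then show "p \<in> M'" using p(1) by simp
    qed
    have "(0 + w, 0 + w) \<in> M'" unfolding M'_def mem_glue using z GW_self by blast
    then have wM': "(w, w) \<in> M'" by simp
    have "M' \<in> A" using g' sub Mu unfolding A_def by blast
    then have "M' = M" using max sub by blast
    then have "w \<in> fst ` M" using wM' by force
    then have "cinner w w = 0" by (rule w(2))
    with w(1) show False by simp
  qed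
  then show ?thesis using Mg Mu by blast
qed

end

lemma scaleC_tendsto: "s \<longlonglongrightarrow> x \<Longrightarrow> (\<lambda>n. c *\<^sub>C s n) \<longlonglongrightarrow> c *\<^sub>C (x::'a::chilbert_space)"
proof -
  have "bounded_linear (\<lambda>x::'a. c *\<^sub>C x)"
  proof (rule bounded_linear_intro[where K = "cmod c"])
    show "c *\<^sub>C (a + b) = c *\<^sub>C a + c *\<^sub>C b" for a b by (rule scaleC_add_right)
    show "c *\<^sub>C (r *\<^sub>R a) = r *\<^sub>R (c *\<^sub>C a)" for r a by (simp add: scaleR_scaleC scaleC_scaleC mult.commute)
    show "norm (c *\<^sub>C a) \<le> norm a * cmod c" for a by (simp add: norm_scaleC mult.commute)
  qed
  then show "s \<longlonglongrightarrow> x \<Longrightarrow> (\<lambda>n. c *\<^sub>C s n) \<longlonglongrightarrow> c *\<^sub>C x" by (rule bounded_linear.tendsto)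
qed

context nsetting begin

lemma extension:
  assumes G: "good N S G" and dense: "closure (fst ` G) = UNIV"
  shows "\<exists>E. (\<forall>x y. E (x + y) = E x + E y) \<and> (\<forall>c x. E (c *\<^sub>C x) = cnj c *\<^sub>C E x) \<and>
    (\<forall>x. norm (E x) = norm x) \<and> (\<forall>x. E (E x) = x) \<and>
    (\<forall>x. E (N x) = S (E x)) \<and> (\<forall>x. E (S x) = N (E x)) \<and> (\<forall>x y. (x, y) \<in> G \<longrightarrow> E x = y)"
proof -
  define V where "V = fst ` G"
  define f where "f x = (THE y. (x, y) \<in> G)" for x
  have fG: "(x, f x) \<in> G" if xV: "x \<in> V" for x
  proof -
    obtain y where y: "(x, y) \<in> G" using xV unfolding V_def by force
    have "(THE y. (x, y) \<in> G) = y"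
    proof (rule the_equality)
      show "(x, y) \<in> G" by (rule y)
      fix y' assume "(x, y') \<in> G" then show "y' = y" using goodD(1)[OF G y] by blast
    qed
    then show ?thesis using y by (simp add: f_def)
  qed
  have fval: "f x = y" if "(x, y) \<in> G" for x y
    using goodD(1)[OF G that fG] that by (force simp: V_def)
  have Vin: "x \<in> V" if "(x, y) \<in> G" for x y using that by (force simp: V_def)
  have fV: "f x \<in> V" if "x \<in> V" for x using goodD(5)[OF G fG[OF that]] Vin by blast
  have fdiff: "norm (f a - f b) = norm (a - b)" if "a \<in> V" "b \<in> V" for a b
    using goodD(4)[OF G good_diff[OF G fG[OF that(1)] fG[OF that(2)]]] .
  have "\<forall>x. \<exists>s. (\<forall>n. s n \<in> V) \<and> s \<longlonglongrightarrow> x"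
  proof
    fix x
    have "x \<in> closure V" using dense by (simp add: V_def)
    then show "\<exists>s. (\<forall>n. s n \<in> V) \<and> s \<longlonglongrightarrow> x" unfolding closure_sequential by blast
  qed
  then obtain sq where sq: "\<And>x n. sq x n \<in> V" "\<And>x. sq x \<longlonglongrightarrow> x" by metis
  define E where "E x = lim (\<lambda>n. f (sq x n))" for x
  have conv: "(\<lambda>n. f (s n)) \<longlonglongrightarrow> E x" if s: "\<And>n. s n \<in> V" "s \<longlonglongrightarrow> x" for s x
  proof -
    let ?t = "sq x"
    have "Cauchy ?t" using sq(2) by (rule LIMSEQ_imp_Cauchy)
    have "Cauchy (\<lambda>n. f (?t n))"
      unfolding Cauchy_def
    proof (intro allI impI)
      fix e :: real assume "e > 0"
      then obtain M where M: "\<forall>m\<ge>M. \<forall>n\<ge>M. dist (?t m) (?t n) < e"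
        using \<open>Cauchy ?t\<close> unfolding Cauchy_def by blast
      show "\<exists>M. \<forall>m\<ge>M. \<forall>n\<ge>M. dist (f (?t m)) (f (?t n)) < e"
      proof (intro exI allI impI)
        fix m n assume "M \<le> m" "M \<le> n"
        then have "dist (?t m) (?t n) < e" using M by blast
        then show "dist (f (?t m)) (f (?t n)) < e" by (simp add: dist_norm fdiff sq(1))
      qed
    qed
    then have t: "(\<lambda>n. f (?t n)) \<longlonglongrightarrow> E x"
      unfolding E_def Cauchy_convergent_iff convergent_LIMSEQ_iff .
    have "(\<lambda>n. s n - ?t n) \<longlonglongrightarrow> x - x" by (rule tendsto_diff[OF s(2) sq(2)])
    then have "(\<lambda>n. norm (s n - ?t n)) \<longlonglongrightarrow> 0" using tendsto_norm_zero_iff by force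
    then have "(\<lambda>n. norm (f (s n) - f (?t n))) \<longlonglongrightarrow> 0" by (simp add: fdiff s(1) sq(1))
    then have "(\<lambda>n. f (s n) - f (?t n)) \<longlonglongrightarrow> 0" by (rule tendsto_norm_zero_cancel)
    from tendsto_add[OF t this] show ?thesis by simp
  qed
  have Ef: "E x = f x" if "x \<in> V" for x
  proof -
    have "(\<lambda>n. f x) \<longlonglongrightarrow> E x" by (rule conv[of "\<lambda>n. x"]) (simp_all add: that)
    from LIMSEQ_unique[OF tendsto_const this] show ?thesis by simp
  qed
  have add: "E (x + y) = E x + E y" for x y
  proof -
    have g2: "(sq x n + sq y n, f (sq x n) + f (sq y n)) \<in> G" for n
      by (rule goodD(2)[OF G fG[OF sq(1)] fG[OF sq(1)]])
    have inV: "sq x n + sq y n \<in> V" for n by (rule Vin[OF g2])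
    have "(\<lambda>n. f (sq x n + sq y n)) \<longlonglongrightarrow> E (x + y)"
      by (rule conv[OF inV tendsto_add[OF sq(2) sq(2)]])
    moreover have "(\<lambda>n. f (sq x n + sq y n)) = (\<lambda>n. f (sq x n) + f (sq y n))"
      by (rule ext) (rule fval[OF g2])
    moreover have "(\<lambda>n. f (sq x n) + f (sq y n)) \<longlonglongrightarrow> E x + E y"
      by (rule tendsto_add[OF conv[OF sq] conv[OF sq]])
    ultimately show ?thesis using LIMSEQ_unique by metis
  qed
  have scal: "E (c *\<^sub>C x) = cnj c *\<^sub>C E x" for c x
  proof -
    have g2: "(c *\<^sub>C sq x n, cnj c *\<^sub>C f (sq x n)) \<in> G" for n
      by (rule goodD(3)[OF G fG[OF sq(1)]])
    have inV: "c *\<^sub>C sq x n \<in> V" for n by (rule Vin[OF g2])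
    have "(\<lambda>n. f (c *\<^sub>C sq x n)) \<longlonglongrightarrow> E (c *\<^sub>C x)"
      by (rule conv[OF inV scaleC_tendsto[OF sq(2)]])
    moreover have "(\<lambda>n. f (c *\<^sub>C sq x n)) = (\<lambda>n. cnj c *\<^sub>C f (sq x n))"
      by (rule ext) (rule fval[OF g2])
    moreover have "(\<lambda>n. cnj c *\<^sub>C f (sq x n)) \<longlonglongrightarrow> cnj c *\<^sub>C E x"
      by (rule scaleC_tendsto[OF conv[OF sq]])
    ultimately show ?thesis using LIMSEQ_unique by metis
  qed
  have nrm: "norm (E x) = norm x" for x
  proof -
    have "(\<lambda>n. norm (f (sq x n))) \<longlonglongrightarrow> norm (E x)" by (rule tendsto_norm[OF conv[OF sq]])
    moreover have "(\<lambda>n. norm (f (sq x n))) = (\<lambda>n. norm (sq x n))"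
      by (rule ext) (rule goodD(4)[OF G fG[OF sq(1)]])
    moreover have "(\<lambda>n. norm (sq x n)) \<longlonglongrightarrow> norm x" by (rule tendsto_norm[OF sq(2)])
    ultimately show ?thesis using LIMSEQ_unique by metis
  qed
  have inv: "E (E x) = x" for x
  proof -
    have "(\<lambda>n. f (f (sq x n))) \<longlonglongrightarrow> E (E x)" by (rule conv[OF fV[OF sq(1)] conv[OF sq]])
    moreover have "(\<lambda>n. f (f (sq x n))) = sq x"
      by (rule ext) (rule fval[OF goodD(5)[OF G fG[OF sq(1)]]])
    ultimately show ?thesis using LIMSEQ_unique sq(2) by metis
  qed
  have NL: "bounded_linear N" "bounded_linear S" using Nb Sb by (simp_all add: bounded_op_def)
  have EN: "E (N x) = S (E x)" for x
  proof -
    have g2: "(N (sq x n), S (f (sq x n))) \<in> G" for n by (rule goodD(6)[OF G fG[OF sq(1)]])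
    have inV: "N (sq x n) \<in> V" for n by (rule Vin[OF g2])
    have "(\<lambda>n. f (N (sq x n))) \<longlonglongrightarrow> E (N x)"
      by (rule conv[OF inV bounded_linear.tendsto[OF NL(1) sq(2)]])
    moreover have "(\<lambda>n. f (N (sq x n))) = (\<lambda>n. S (f (sq x n)))"
      by (rule ext) (rule fval[OF g2])
    moreover have "(\<lambda>n. S (f (sq x n))) \<longlonglongrightarrow> S (E x)"
      by (rule bounded_linear.tendsto[OF NL(2) conv[OF sq]])
    ultimately show ?thesis using LIMSEQ_unique by metis
  qed
  have ES: "E (S x) = N (E x)" for x
  proof -
    have g2: "(S (sq x n), N (f (sq x n))) \<in> G" for n by (rule goodD(7)[OF G fG[OF sq(1)]])
    have inV: "S (sq x n) \<in> V" for n by (rule Vin[OF g2])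
    have "(\<lambda>n. f (S (sq x n))) \<longlonglongrightarrow> E (S x)"
      by (rule conv[OF inV bounded_linear.tendsto[OF NL(2) sq(2)]])
    moreover have "(\<lambda>n. f (S (sq x n))) = (\<lambda>n. N (f (sq x n)))"
      by (rule ext) (rule fval[OF g2])
    moreover have "(\<lambda>n. N (f (sq x n))) \<longlonglongrightarrow> N (E x)"
      by (rule bounded_linear.tendsto[OF NL(1) conv[OF sq]])
    ultimately show ?thesis using LIMSEQ_unique by metis
  qed
  have EG: "E x = y" if "(x, y) \<in> G" for x y using Ef[OF Vin[OF that]] fval[OF that] by simp
  show ?thesis using add scal nrm inv EN ES EG by blast
qed

end

lemma conj_inner:
  fixes E :: "'a::chilbert_space \<Rightarrow> 'a"
  assumes add: "\<And>x y. E (x + y) = E x + E y" and scal: "\<And>c x. E (c *\<^sub>C x) = cnj c *\<^sub>C E x"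
    and nrm: "\<And>x. norm (E x) = norm x"
  shows "cinner (E a) (E b) = cnj (cinner a b)"
proof -
  have re: "Re (cinner (E a) (E b)) = Re (cinner a b)" for a b
  proof -
    have "(norm (E a + E b))\<^sup>2 = (norm (a + b))\<^sup>2" by (simp add: add[symmetric] nrm)
    then show ?thesis by (simp add: norm_add_sq nrm)
  qed
  have "Re (cinner (E a) (E (\<i> *\<^sub>C b))) = Re (cinner a (\<i> *\<^sub>C b))" by (rule re)
  then have im: "Im (cinner (E a) (E b)) = - Im (cinner a b)"
    by (simp add: scal cinner_scaleC_right scaleC_minus_left cinner_minus_right)
  show ?thesis by (rule complex_eqI) (simp_all add: re im)
qed

theorem corollary4p6:
  fixes N P :: "'a::chilbert_space \<Rightarrow> 'a" and a :: complex
  assumes "separable_type TYPE('a)"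
    and "normal_op N"
    and "orth_projection P" and "rank_one P"
  shows "complex_symmetric (\<lambda>x. N x + a *\<^sub>C P x)"
proof -
  define S where "S = adjoint N"
  have Nb: "bounded_op N" using assms(2) by (simp add: normal_op_def)
  have Sb: "bounded_op S" unfolding S_def by (rule adjoint_bounded[OF Nb])
  have adj: "cinner (N x) y = cinner x (S y)" for x y unfolding S_def by (rule adjoint_prop[OF Nb])
  have comm: "N (S x) = S (N x)" for x
    using assms(2) unfolding normal_op_def S_def by (metis comp_apply)
  interpret nsetting N S using Nb Sb adj comm by unfold_locales
  have Pb: "bounded_op P" and PP: "\<And>x. P (P x) = P x" and adjP: "adjoint P = P"
    using assms(3) unfolding orth_projection_def by (auto simp: fun_eq_iff)
  have Padj: "cinner (P x) y = cinner x (P y)" for x y using adjoint_prop[OF Pb] adjP by simp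
  obtain v where v: "v \<noteq> 0" "range P = {c *\<^sub>C v | c. True}"
    using assms(4) unfolding rank_one_def by blast
  define u where "u = complex_of_real (1 / norm v) *\<^sub>C v"
  have nu: "norm u = 1" using v(1) by (simp add: u_def norm_scaleC norm_divide)
  have uu: "cinner u u = 1" by (simp add: cinner_self_norm nu)
  have vu: "v = complex_of_real (norm v) *\<^sub>C u"
    using v(1) by (simp add: u_def scaleC_scaleC scaleC_one flip: of_real_mult)
  have "u \<in> range P" unfolding v(2) u_def by blast
  then obtain z where "u = P z" by blast
  then have Pu: "P u = u" using PP by simp
  have Pform: "P x = cinner u x *\<^sub>C u" for x
  proof -
    have "P x \<in> range P" by simp
    then obtain c where "P x = c *\<^sub>C v" unfolding v(2) by blast
    then obtain d where d: "P x = d *\<^sub>C u" using vu by (metis scaleC_scaleC)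
    have "cinner u (P x) = d" by (simp add: d cinner_scaleC_right uu)
    moreover have "cinner u (P x) = cinner u x" using Padj[of u x] Pu by simp
    ultimately show ?thesis using d by simp
  qed
  obtain G where G: "good N S G" "(u, u) \<in> G" "closure (fst ` G) = UNIV"
    using exists_dense[of u] by blast
  obtain E where Eadd: "\<And>x y. E (x + y) = E x + E y" and Escal: "\<And>c x. E (c *\<^sub>C x) = cnj c *\<^sub>C E x"
    and Enrm: "\<And>x. norm (E x) = norm x" and Einv: "\<And>x. E (E x) = x"
    and EN: "\<And>x. E (N x) = S (E x)" and ES: "\<And>x. E (S x) = N (E x)"
    and EG: "\<And>x y. (x, y) \<in> G \<Longrightarrow> E x = y"
    using extension[OF G(1) G(3)] by blast
  have Eu: "E u = u" by (rule EG[OF G(2)])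
  have Ein: "cinner (E x) (E y) = cnj (cinner x y)" for x y by (rule conj_inner[OF Eadd Escal Enrm])
  define T where "T = (\<lambda>x. N x + a *\<^sub>C P x)"
  have Tb: "bounded_op T"
  proof -
    have NL: "bounded_linear N" and PL: "bounded_linear P" using Nb Pb by (simp_all add: bounded_op_def)
    have aL: "bounded_linear (\<lambda>x::'a. a *\<^sub>C x)"
    proof (rule bounded_linear_intro[where K = "cmod a"])
      show "a *\<^sub>C (x + y) = a *\<^sub>C x + a *\<^sub>C y" for x y by (rule scaleC_add_right)
      show "a *\<^sub>C (r *\<^sub>R x) = r *\<^sub>R (a *\<^sub>C x)" for r x by (simp add: scaleR_scaleC scaleC_scaleC mult.commute)
      show "norm (a *\<^sub>C x) \<le> norm x * cmod a" for x by (simp add: norm_scaleC mult.commute)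
    qed
    have "bounded_linear T" unfolding T_def
      by (rule bounded_linear_add[OF NL bounded_linear_compose[OF aL PL]])
    moreover have "T (c *\<^sub>C x) = c *\<^sub>C T x" for c x
      by (simp add: T_def bounded_opD[OF Nb] bounded_opD[OF Pb] scaleC_add_right scaleC_scaleC mult.commute)
    ultimately show ?thesis by (simp add: bounded_op_def)
  qed
  have adjT: "adjoint T = (\<lambda>y. S y + cnj a *\<^sub>C P y)"
  proof (rule adjoint_eq[OF Tb])
    fix x y
    show "cinner (T x) y = cinner x (S y + cnj a *\<^sub>C P y)"
      by (simp add: T_def cinner_add_left cinner_add_right cinner_scaleC_left cinner_scaleC_right adj Padj)
  qed
  have "conjugation E"
    unfolding conjugation_def using Eadd Escal Enrm Einv by (auto simp: fun_eq_iff)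
  moreover have "T = E \<circ> adjoint T \<circ> E"
  proof
    fix x
    have "(E \<circ> adjoint T \<circ> E) x = E (S (E x)) + a *\<^sub>C E (P (E x))"
      by (simp add: adjT Eadd Escal)
    also have "E (S (E x)) = N x" by (simp add: ES Einv)
    also have "E (P (E x)) = P x"
    proof -
      have "cinner u (E x) = cnj (cinner u x)" using Ein[of u x] Eu by simp
      then show ?thesis by (simp add: Pform Escal Eu)
    qed
    finally show "T x = (E \<circ> adjoint T \<circ> E) x" by (simp add: T_def)
  qed
  ultimately show ?thesis unfolding complex_symmetric_def T_def by blast
qed

end
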